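(* Let $\Gamma=A\ast B$ be a free product of two non-trivial groups $A,B$, and let $E$ be a Banach $\Gamma$-module (regarded also as an $A$-module and a $B$-module via the inclusions $A,B\hookrightarrow\Gamma$). For $f_A\in\mathrm{Q}\mathcal{Z}_{\mathrm{alt}}(A,E)$ and $f_B\in\mathrm{Q}\mathcal{Z}_{\mathrm{alt}}(B,E)$, the split map $f=f_A\ast f_B:\Gamma\to E$ is an alternating quasicocycle on $\Gamma$ with $\mathrm{def}\, f=\max\{\mathrm{def}\, f_A,\mathrm{def}\, f_B\}$. Moreover, the induced linear map \[ \mathrm{Q}\mathcal{Z}_{\mathrm{alt}}(A,E)\times\mathrm{Q}\mathcal{Z}_{\mathrm{alt}}(B,E)\to\mathrm{Q}\mathcal{Z}_{\mathrm{alt}}(\Gamma,E),\quad (f_A,f_B)\mapsto f_A\ast f_B \] extends the natural isomorphism $\mathcal{Z}^1(A,E)\times\mathcal{Z}^1(B,E)\to\mathcal{Z}^1(\Gamma,E)$.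
   Context: A Banach $\Gamma$-module is a Banach space $E$ with a linear isometric action of $\Gamma$, written $g.v$. A map $f:\Gamma\to E$ is a quasicocycle if $\mathrm{def}\, f:=\sup_{g,h\in\Gamma}\|f(gh)-f(g)-g.f(h)\|_E<\infty$; $\mathrm{Q}\mathcal{Z}(\Gamma,E)$ denotes the space of quasicocycles, and $\mathrm{Q}\mathcal{Z}_{\mathrm{alt}}(\Gamma,E)$ the subspace of alternating ones, i.e. those with $f(g)+g.f(g^{-1})=0$ for all $g$. $\mathcal{Z}^1(\Gamma,E)$ denotes the space of cocycles, i.e. maps with $f(gh)=f(g)+g.f(h)$. Every $1\neq g\in\Gamma=A\ast B$ has a unique normal form $g=a_1b_1a_2b_2\cdots a_nb_n$ with $a_i\in A$, $b_i\in B$, all non-trivial except possibly $a_1$ or $b_n$. The split map is defined by $(f_A\ast f_B)(1)=0$ and \[ (f_A\ast f_B)(a_1b_1\cdots a_nb_n)=f_A(a_1)+a_1.f_B(b_1)+a_1b_1.f_A(a_2)+\dots+a_1b_1a_2\cdots b_{n-1}a_n.f_B(b_n). \] *)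

theory Defs
  imports Complex_Main "HOL-Algebra.Group"
begin

definition banach_module :: "('g,'m) monoid_scheme \<Rightarrow> ('g \<Rightarrow> 'e::banach \<Rightarrow> 'e) \<Rightarrow> bool" where
  "banach_module G act \<longleftrightarrow>
     (\<forall>g\<in>carrier G. linear (act g) \<and> (\<forall>v. norm (act g v) = norm v)) \<and>
     (\<forall>v. act \<one>\<^bsub>G\<^esub> v = v) \<and>
     (\<forall>g\<in>carrier G. \<forall>h\<in>carrier G. \<forall>v. act (g \<otimes>\<^bsub>G\<^esub> h) v = act g (act h v))"

definition quasicocycle :: "('g,'m) monoid_scheme \<Rightarrow> 'g set \<Rightarrow> ('g \<Rightarrow> 'e::real_normed_vector \<Rightarrow> 'e) \<Rightarrow> ('g \<Rightarrow> 'e) \<Rightarrow> bool" where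
  "quasicocycle G H act f \<longleftrightarrow>
     bdd_above {norm (f (g \<otimes>\<^bsub>G\<^esub> h) - f g - act g (f h)) | g h. g \<in> H \<and> h \<in> H}"

definition defect :: "('g,'m) monoid_scheme \<Rightarrow> 'g set \<Rightarrow> ('g \<Rightarrow> 'e::real_normed_vector \<Rightarrow> 'e) \<Rightarrow> ('g \<Rightarrow> 'e) \<Rightarrow> real" where
  "defect G H act f = Sup {norm (f (g \<otimes>\<^bsub>G\<^esub> h) - f g - act g (f h)) | g h. g \<in> H \<and> h \<in> H}"

definition alternating :: "('g,'m) monoid_scheme \<Rightarrow> 'g set \<Rightarrow> ('g \<Rightarrow> 'e::real_normed_vector \<Rightarrow> 'e) \<Rightarrow> ('g \<Rightarrow> 'e) \<Rightarrow> bool" where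
  "alternating G H act f \<longleftrightarrow> (\<forall>g\<in>H. f g + act g (f (inv\<^bsub>G\<^esub> g)) = 0)"

definition alt_quasicocycle :: "('g,'m) monoid_scheme \<Rightarrow> 'g set \<Rightarrow> ('g \<Rightarrow> 'e::real_normed_vector \<Rightarrow> 'e) \<Rightarrow> ('g \<Rightarrow> 'e) \<Rightarrow> bool" where
  "alt_quasicocycle G H act f \<longleftrightarrow> quasicocycle G H act f \<and> alternating G H act f"

definition cocycle :: "('g,'m) monoid_scheme \<Rightarrow> 'g set \<Rightarrow> ('g \<Rightarrow> 'e::real_normed_vector \<Rightarrow> 'e) \<Rightarrow> ('g \<Rightarrow> 'e) \<Rightarrow> bool" where
  "cocycle G H act f \<longleftrightarrow> (\<forall>g\<in>H. \<forall>h\<in>H. f (g \<otimes>\<^bsub>G\<^esub> h) = f g + act g (f h))"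

text \<open>Normal forms: a list [(a1,b1),...,(an,bn)], n \<ge> 1, with ai in A, bi in B, all
  non-trivial except possibly a1 and bn, whose product a1 b1 ... an bn is g.\<close>
definition pairs_prod :: "('g,'m) monoid_scheme \<Rightarrow> ('g \<times> 'g) list \<Rightarrow> 'g" where
  "pairs_prod G ps = foldr (\<lambda>(a,b) x. a \<otimes>\<^bsub>G\<^esub> b \<otimes>\<^bsub>G\<^esub> x) ps \<one>\<^bsub>G\<^esub>"

definition is_normal_form :: "('g,'m) monoid_scheme \<Rightarrow> 'g set \<Rightarrow> 'g set \<Rightarrow> ('g \<times> 'g) list \<Rightarrow> 'g \<Rightarrow> bool" where
  "is_normal_form G A B ps g \<longleftrightarrow>
     ps \<noteq> [] \<and>
     (\<forall>i<length ps. fst (ps ! i) \<in> A \<and> snd (ps ! i) \<in> B) \<and>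
     (\<forall>i<length ps. i \<noteq> 0 \<longrightarrow> fst (ps ! i) \<noteq> \<one>\<^bsub>G\<^esub>) \<and>
     (\<forall>i<length ps. i \<noteq> length ps - 1 \<longrightarrow> snd (ps ! i) \<noteq> \<one>\<^bsub>G\<^esub>) \<and>
     pairs_prod G ps = g"

definition is_free_product :: "('g,'m) monoid_scheme \<Rightarrow> 'g set \<Rightarrow> 'g set \<Rightarrow> bool" where
  "is_free_product G A B \<longleftrightarrow> group G \<and> subgroup A G \<and> subgroup B G \<and>
     (\<forall>g\<in>carrier G. g \<noteq> \<one>\<^bsub>G\<^esub> \<longrightarrow> (\<exists>!ps. is_normal_form G A B ps g))"

fun split_aux :: "('g,'m) monoid_scheme \<Rightarrow> ('g \<Rightarrow> 'e \<Rightarrow> 'e) \<Rightarrow> ('g \<Rightarrow> 'e::real_normed_vector) \<Rightarrow> ('g \<Rightarrow> 'e)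
                  \<Rightarrow> 'g \<Rightarrow> ('g \<times> 'g) list \<Rightarrow> 'e" where
  "split_aux G act fA fB pre [] = 0"
| "split_aux G act fA fB pre ((a,b) # ps) =
     act pre (fA a) + act (pre \<otimes>\<^bsub>G\<^esub> a) (fB b) + split_aux G act fA fB (pre \<otimes>\<^bsub>G\<^esub> a \<otimes>\<^bsub>G\<^esub> b) ps"

definition split_map :: "('g,'m) monoid_scheme \<Rightarrow> 'g set \<Rightarrow> 'g set \<Rightarrow> ('g \<Rightarrow> 'e \<Rightarrow> 'e)
     \<Rightarrow> ('g \<Rightarrow> 'e::real_normed_vector) \<Rightarrow> ('g \<Rightarrow> 'e) \<Rightarrow> 'g \<Rightarrow> 'e" where
  "split_map G A B act fA fB g =
     (if g = \<one>\<^bsub>G\<^esub> then 0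
      else split_aux G act fA fB \<one>\<^bsub>G\<^esub> (THE ps. is_normal_form G A B ps g))"

end

theory Submission imports Defs begin

lemma grp_aux: "(p::'a::ab_group_add) = q - (q + a) - b \<Longrightarrow> a + b = 0 \<Longrightarrow> p = 0"
proof -
  assume 1: "p = q - (q + a) - b" and 2: "a + b = 0"
  have "p = - (a + b)" using 1 by (simp add: algebra_simps)
  then show ?thesis using 2 by simp
qed

lemma double_zero: "(x::'a::real_vector) + x = 0 \<Longrightarrow> x = 0"
proof -
  assume "x + x = 0"
  then have "(2::real) *\<^sub>R x = 0" by (simp add: scaleR_2)
  then show ?thesis by simp
qed

locale fp0 = group G for G :: "('g,'m) monoid_scheme" (structure) +
  fixes A B :: "'g set" and act :: "'g \<Rightarrow> 'e::banach \<Rightarrow> 'e"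
  assumes subA: "subgroup A G" and subB: "subgroup B G"
    and uniq: "\<forall>g\<in>carrier G. g \<noteq> \<one> \<longrightarrow> (\<exists>!ps. is_normal_form G A B ps g)"
    and module: "banach_module G act"
begin

lemma A_car: "x \<in> A \<Longrightarrow> x \<in> carrier G" using subgroup.subset[OF subA] by (rule subsetD)
lemma B_car: "x \<in> B \<Longrightarrow> x \<in> carrier G" using subgroup.subset[OF subB] by (rule subsetD)
lemma one_A: "\<one> \<in> A" by (rule subgroup.one_closed[OF subA])
lemma one_B: "\<one> \<in> B" by (rule subgroup.one_closed[OF subB])
lemma A_mult: "x \<in> A \<Longrightarrow> y \<in> A \<Longrightarrow> x \<otimes> y \<in> A" by (rule subgroup.m_closed[OF subA])
lemma B_mult: "x \<in> B \<Longrightarrow> y \<in> B \<Longrightarrow> x \<otimes> y \<in> B" by (rule subgroup.m_closed[OF subB])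
lemma A_inv: assumes "x \<in> carrier G" shows "inv x \<in> A \<longleftrightarrow> x \<in> A"
proof
  assume "inv x \<in> A"
  then have "inv (inv x) \<in> A" by (rule subgroup.m_inv_closed[OF subA])
  then show "x \<in> A" using assms by simp
next
  assume "x \<in> A" then show "inv x \<in> A" by (rule subgroup.m_inv_closed[OF subA])
qed
lemma B_inv: assumes "x \<in> carrier G" shows "inv x \<in> B \<longleftrightarrow> x \<in> B"
proof
  assume "inv x \<in> B"
  then have "inv (inv x) \<in> B" by (rule subgroup.m_inv_closed[OF subB])
  then show "x \<in> B" using assms by simp
next
  assume "x \<in> B" then show "inv x \<in> B" by (rule subgroup.m_inv_closed[OF subB])
qed

lemma act_inv_cancel: "g \<in> carrier G \<Longrightarrow> act g (act (inv g) v) = v"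
  using module unfolding banach_module_def by (metis inv_closed r_inv)

lemma mod_parts: "\<forall>g\<in>carrier G. linear (act g) \<and> (\<forall>v. norm (act g v) = norm v)"
  "\<forall>v. act \<one> v = v" "\<forall>g\<in>carrier G. \<forall>h\<in>carrier G. \<forall>v. act (g \<otimes> h) v = act g (act h v)"
  using module unfolding banach_module_def by simp_all
lemma act_lin: "g \<in> carrier G \<Longrightarrow> linear (act g)" using mod_parts(1) by simp
lemma act_add: "g \<in> carrier G \<Longrightarrow> act g (x + y) = act g x + act g y" by (rule linear_add[OF act_lin])
lemma act_diff: "g \<in> carrier G \<Longrightarrow> act g (x - y) = act g x - act g y" by (rule linear_diff[OF act_lin])
lemma act_zero: "g \<in> carrier G \<Longrightarrow> act g 0 = 0" by (rule linear_0[OF act_lin])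
lemma act_scale: "g \<in> carrier G \<Longrightarrow> act g (c *\<^sub>R x) = c *\<^sub>R act g x" by (rule linear_scale[OF act_lin])
lemma act_norm: "g \<in> carrier G \<Longrightarrow> norm (act g x) = norm x" using mod_parts(1) by simp
lemma act_one: "act \<one> x = x" using mod_parts(2) by simp
lemma act_mult: "g \<in> carrier G \<Longrightarrow> h \<in> carrier G \<Longrightarrow> act (g \<otimes> h) x = act g (act h x)"
  using mod_parts(3) by simp

lemma nf1: "x \<in> A \<Longrightarrow> is_normal_form G A B [(x,\<one>)] x"
  unfolding is_normal_form_def pairs_prod_def using one_B A_car by auto
lemma nf2: "x \<in> B \<Longrightarrow> is_normal_form G A B [(\<one>,x)] x"
  unfolding is_normal_form_def pairs_prod_def using one_A B_car by auto

lemma AB_int: "A \<inter> B = {\<one>}"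
proof -
  have "x = \<one>" if "x \<in> A" "x \<in> B" for x
  proof (rule ccontr)
    assume "x \<noteq> \<one>"
    then have "[(x,\<one>)] = [(\<one>,x)]" using uniq nf1[OF that(1)] nf2[OF that(2)] A_car that(1) by blast
    with \<open>x \<noteq> \<one>\<close> show False by simp
  qed
  then show ?thesis using one_A one_B by blast
qed


definition L where "L = (A \<union> B) - {\<one>}"
definition samef where "samef x y \<longleftrightarrow> (x\<in>A \<and> y\<in>A) \<or> (x\<in>B \<and> y\<in>B)"
definition red where "red xs \<longleftrightarrow> set xs \<subseteq> L \<and> successively (\<lambda>x y. \<not> samef x y) xs"
definition prod where "prod xs = foldr (\<otimes>) xs \<one>"

lemma L_car: "x \<in> L \<Longrightarrow> x \<in> carrier G" unfolding L_def using A_car B_car by blast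

lemma prod_Nil[simp]: "prod [] = \<one>" and prod_Cons[simp]: "prod (x#xs) = x \<otimes> prod xs"
  by (simp_all add: prod_def)

lemma prod_car: "set xs \<subseteq> carrier G \<Longrightarrow> prod xs \<in> carrier G"
  by (induction xs) auto

lemma prod_append: "set xs \<subseteq> carrier G \<Longrightarrow> set ys \<subseteq> carrier G \<Longrightarrow> prod (xs@ys) = prod xs \<otimes> prod ys"
  by (induction xs) (auto simp: prod_car m_assoc)

lemma red_Nil[simp]: "red []" by (simp add: red_def)
lemma red_single[simp]: "red [x] \<longleftrightarrow> x \<in> L" by (simp add: red_def)
lemma red_Cons: "red (x#xs) \<longleftrightarrow> x \<in> L \<and> red xs \<and> (xs = [] \<or> \<not> samef x (hd xs))"
  by (auto simp: red_def successively_Cons)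
lemma red_append: "red (xs@ys) \<longleftrightarrow> red xs \<and> red ys \<and> (xs = [] \<or> ys = [] \<or> \<not> samef (last xs) (hd ys))"
  by (auto simp: red_def successively_append_iff)
lemma red_car: "red xs \<Longrightarrow> set xs \<subseteq> carrier G" using L_car red_def by blast

lemma notboth: "x \<noteq> \<one> \<Longrightarrow> x \<in> A \<Longrightarrow> x \<notin> B" using AB_int by blast
lemma L_AB: "x \<in> L \<Longrightarrow> x \<in> B \<longleftrightarrow> x \<notin> A" unfolding L_def using notboth by blast
lemma samef_iff: "x \<in> L \<Longrightarrow> y \<in> L \<Longrightarrow> samef x y \<longleftrightarrow> (x \<in> A \<longleftrightarrow> y \<in> A)"
  unfolding samef_def using L_AB by blast

lemma reduce_exists: "set xs \<subseteq> A \<union> B \<Longrightarrow> \<exists>ys. red ys \<and> prod ys = prod xs"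
proof (induction xs)
  case Nil then show ?case by (intro exI[of _ "[]"]) simp
next
  case (Cons x xs)
  then obtain ys where ys: "red ys" "prod ys = prod xs" by auto
  have xc: "x \<in> carrier G" using Cons.prems A_car B_car by auto
  have xsc: "prod xs \<in> carrier G" using Cons.prems A_car B_car by (intro prod_car) auto
  show ?case
  proof (cases "x = \<one>")
    case True then show ?thesis using ys xsc by (intro exI[of _ ys]) simp
  next
    case xn: False
    then have xL: "x \<in> L" using Cons.prems L_def by auto
    show ?thesis
    proof (cases ys)
      case Nil then show ?thesis using ys xL by (intro exI[of _ "[x]"]) auto
    next
      case (Cons y ys')
      have yL: "y \<in> L" and rys': "red ys'" and hy: "ys' = [] \<or> \<not> samef y (hd ys')"
        using ys(1) Cons by (auto simp: red_Cons)
      have yc: "y \<in> carrier G" using yL L_car by auto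
      have ys'c: "prod ys' \<in> carrier G" using rys' red_car prod_car by auto
      show ?thesis
      proof (cases "samef x y")
        case False
        then show ?thesis using ys Cons xL by (intro exI[of _ "x#ys"]) (auto simp: red_Cons)
      next
        case True
        define z where "z = x \<otimes> y"
        have zX: "(z \<in> A \<and> x \<in> A \<and> y \<in> A) \<or> (z \<in> B \<and> x \<in> B \<and> y \<in> B)"
          using True A_mult B_mult unfolding z_def samef_def by blast
        have pz: "x \<otimes> prod ys = z \<otimes> prod ys'" using Cons xc yc ys'c by (simp add: z_def m_assoc)
        show ?thesis
        proof (cases "z = \<one>")
          case True
          then show ?thesis using pz ys rys' ys'c by (intro exI[of _ ys']) auto
        next
          case False
          have zL: "z \<in> L" using zX False L_def by auto
          have zy: "z \<in> A \<longleftrightarrow> y \<in> A" using zX zL yL L_AB by blast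
          have "ys' = [] \<or> \<not> samef z (hd ys')"
          proof (cases ys')
            case (Cons w ws)
            then have "w \<in> L" using rys' by (simp add: red_Cons)
            then show ?thesis using hy Cons zL yL zy by (simp add: samef_iff)
          qed simp
          moreover note zL
          ultimately show ?thesis using pz ys rys' by (intro exI[of _ "z#ys'"]) (auto simp: red_Cons)
        qed
      qed
    qed
  qed
qed

lemma nf_sets: "is_normal_form G A B ps g \<Longrightarrow> p \<in> set ps \<Longrightarrow> fst p \<in> A \<and> snd p \<in> B"
proof -
  assume nf: "is_normal_form G A B ps g" and p: "p \<in> set ps"
  then obtain i where i: "i < length ps" "p = ps ! i" by (auto simp: in_set_conv_nth)
  then show ?thesis using nf unfolding is_normal_form_def by simp
qed

lemma AB_car: "set xs \<subseteq> A \<union> B \<Longrightarrow> set xs \<subseteq> carrier G"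
  using A_car B_car by blast

lemma pairs_word: "(\<forall>p\<in>set ps. fst p \<in> A \<and> snd p \<in> B) \<Longrightarrow>
   set (concat (map (\<lambda>(a,b). [a,b]) ps)) \<subseteq> A \<union> B \<and> prod (concat (map (\<lambda>(a,b). [a,b]) ps)) = pairs_prod G ps"
proof (induction ps)
  case Nil then show ?case by (simp add: pairs_prod_def)
next
  case (Cons p ps)
  obtain a b where p: "p = (a,b)" by force
  have ab: "a \<in> A" "b \<in> B" using Cons.prems p by auto
  have IH: "set (concat (map (\<lambda>(a,b). [a,b]) ps)) \<subseteq> A \<union> B"
     "prod (concat (map (\<lambda>(a,b). [a,b]) ps)) = pairs_prod G ps" using Cons by auto
  have c: "pairs_prod G ps \<in> carrier G" using prod_car[OF AB_car[OF IH(1)]] IH(2) by simp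
  have "pairs_prod G (p#ps) = a \<otimes> b \<otimes> pairs_prod G ps" using p by (simp add: pairs_prod_def)
  moreover have "prod (concat (map (\<lambda>(a,b). [a,b]) (p#ps))) = a \<otimes> (b \<otimes> pairs_prod G ps)"
    using p IH(2) by simp
  ultimately show ?case using IH(1) ab A_car B_car c p by (simp add: m_assoc)
qed

lemma red_word: "g \<in> carrier G \<Longrightarrow> \<exists>gs. red gs \<and> prod gs = g"
proof (cases "g = \<one>")
  case True then show ?thesis by (intro exI[of _ "[]"]) simp
next
  assume g: "g \<in> carrier G" and "g \<noteq> \<one>"
  then obtain ps where ps: "is_normal_form G A B ps g" using uniq by blast
  then have pp: "pairs_prod G ps = g" unfolding is_normal_form_def by simp
  have "\<forall>p\<in>set ps. fst p \<in> A \<and> snd p \<in> B" using nf_sets[OF ps] by blast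
  note W = pairs_word[OF this]
  obtain ys where "red ys" "prod ys = prod (concat (map (\<lambda>(a,b). [a,b]) ps))"
    using reduce_exists[OF conjunct1[OF W]] by blast
  then show ?thesis using W pp by auto
qed

fun tpA where
  "tpA [] = []"
| "tpA [a] = [(a,\<one>)]"
| "tpA (a#b#xs) = (a,b) # tpA xs"

definition tp where
  "tp xs = (case xs of [] \<Rightarrow> [] | x#xs' \<Rightarrow> if x \<in> A then tpA xs else (\<one>,x) # tpA xs')"

lemma tpA_props:
  "red xs \<Longrightarrow> (xs = [] \<or> hd xs \<in> A) \<Longrightarrow>
    (\<forall>p\<in>set (tpA xs). fst p \<in> A - {\<one>} \<and> snd p \<in> B) \<and> (\<forall>p\<in>set (butlast (tpA xs)). snd p \<noteq> \<one>)
    \<and> pairs_prod G (tpA xs) = prod xs \<and> (tpA xs = [] \<longleftrightarrow> xs = [])"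
proof (induction xs rule: tpA.induct)
  case 1 then show ?case by (simp add: pairs_prod_def)
next
  case (2 a)
  then show ?case using one_B AB_int L_def A_car by (auto simp: pairs_prod_def)
next
  case (3 a b xs)
  have aA: "a \<in> A - {\<one>}" using 3 by (auto simp: red_Cons L_def)
  have bB: "b \<in> B - {\<one>}" using 3 aA AB_int by (auto simp: red_Cons L_def samef_def)
  have rxs: "red xs" using 3 by (simp add: red_Cons)
  have hxs: "xs = [] \<or> hd xs \<in> A"
  proof (cases xs)
    case (Cons c xs')
    then have "c \<in> L" "\<not> samef b c" using 3 by (auto simp: red_Cons)
    then show ?thesis using bB Cons L_def samef_def by auto
  qed simp
  note IH = "3.IH"[OF rxs hxs]
  have "prod xs \<in> carrier G" using rxs red_car prod_car by blast
  then have "pairs_prod G (tpA (a#b#xs)) = prod (a#b#xs)"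
    using IH aA bB A_car B_car by (simp add: pairs_prod_def m_assoc)
  then show ?case using IH aA bB by (auto simp: pairs_prod_def)
qed

lemma nf_intro:
  assumes "ps \<noteq> []" "\<forall>p\<in>set ps. fst p \<in> A \<and> snd p \<in> B" "\<forall>p\<in>set (tl ps). fst p \<noteq> \<one>"
    "\<forall>p\<in>set (butlast ps). snd p \<noteq> \<one>" "pairs_prod G ps = g"
  shows "is_normal_form G A B ps g"
  unfolding is_normal_form_def
proof (intro conjI allI impI)
  fix i assume i: "i < length ps"
  then show "fst (ps ! i) \<in> A" "snd (ps ! i) \<in> B" using assms(2) nth_mem by blast+
  { assume "i \<noteq> 0"
    then have "ps ! i = tl ps ! (i - 1)" using i by (simp add: nth_tl)
    moreover have "i - 1 < length (tl ps)" using i \<open>i \<noteq> 0\<close> by simp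
    ultimately show "fst (ps ! i) \<noteq> \<one>" using assms(3) nth_mem by metis }
  { assume "i \<noteq> length ps - 1"
    then have "i < length (butlast ps)" using i by simp
    then show "snd (ps ! i) \<noteq> \<one>" using assms(4) nth_mem nth_butlast by metis }
qed (use assms in auto)

lemma tp_nf:
  assumes "red xs" "xs \<noteq> []"
  shows "is_normal_form G A B (tp xs) (prod xs)"
proof -
  obtain x xs' where xs: "xs = x#xs'" using assms by (cases xs) auto
  show ?thesis
  proof (cases "x \<in> A")
    case True
    then show ?thesis using tpA_props[OF assms(1)] xs
      by (intro nf_intro) (auto simp: tp_def list.set_sel(2))
  next
    case False
    have xB: "x \<in> B - {\<one>}" using assms xs False by (auto simp: red_Cons L_def)
    have rxs': "red xs'" using assms xs by (simp add: red_Cons)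
    have hxs: "xs' = [] \<or> hd xs' \<in> A"
      using assms xs xB by (cases xs') (auto simp: red_Cons L_def samef_def)
    note P = tpA_props[OF rxs' hxs]
    have "prod xs' \<in> carrier G" using rxs' red_car prod_car by blast
    moreover have "x \<in> carrier G" using xB B_car by auto
    ultimately show ?thesis using P xs False xB one_A
      by (intro nf_intro) (auto simp: tp_def pairs_prod_def butlast.simps(2))
  qed
qed

lemma prod_ne_one:
  assumes "red xs" "xs \<noteq> []"
  shows "prod xs \<noteq> \<one>"
proof
  assume p1: "prod xs = \<one>"
  obtain x ys where xs: "xs = x#ys" using assms by (cases xs) auto
  have xL: "x \<in> L" and rys: "red ys" and hy: "ys = [] \<or> \<not> samef x (hd ys)"
    using assms xs by (auto simp: red_Cons)
  have xc: "x \<in> carrier G" using xL L_car by auto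
  have ysc: "prod ys \<in> carrier G" using rys red_car prod_car by blast
  have pys: "prod ys = inv x" using p1 xs xc ysc by (metis inv_equality inv_comm prod_Cons)
  have ix1: "inv x \<noteq> \<one>" using xL L_def xc by (metis inv_inv inv_one DiffD2 singletonI)
  have ysne: "ys \<noteq> []" using pys ix1 by auto
  have ixL: "inv x \<in> L" using xL xc ix1 A_inv B_inv L_def inv_closed by auto
  have "tp ys = tp [inv x]"
    using uniq tp_nf[OF rys ysne] tp_nf[of "[inv x]"] ixL pys xc ix1 by (metis inv_closed prod_Cons prod_Nil r_one red_single list.distinct(1))
  moreover obtain y ys' where ys: "ys = y # ys'" using ysne by (cases ys) auto
  ultimately have eq: "fst (hd (tp (y#ys'))) = fst (hd (tp [inv x]))" by simp
  have yL: "y \<in> L" and ns: "\<not> samef x y" using hy ys rys by (auto simp: red_Cons)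
  have hA: "fst (hd (tpA (y#ys'))) = y" by (cases ys') auto
  show False
  proof (cases "x \<in> A")
    case True
    then have "inv x \<in> A" using A_inv xc by simp
    then have "fst (hd (tp [inv x])) = inv x" by (simp add: tp_def)
    moreover have "y \<notin> A" using ns True unfolding samef_def by blast
    then have "fst (hd (tp (y#ys'))) = \<one>" by (simp add: tp_def)
    ultimately show False using eq ix1 by simp
  next
    case False
    then have "inv x \<notin> A" using A_inv xc by simp
    then have "fst (hd (tp [inv x])) = \<one>" by (simp add: tp_def)
    moreover have "x \<in> B" using False xL L_def by blast
    then have "y \<in> A" "y \<noteq> \<one>" using ns yL unfolding samef_def L_def by blast+
    then have "fst (hd (tp (y#ys'))) = y" using hA by (simp add: tp_def)
    ultimately show False using eq \<open>y \<noteq> \<one>\<close> by simp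
  qed
qed

end

locale fp = fp0 G A B act for G :: "('g,'m) monoid_scheme" (structure) and A B and act :: "'g \<Rightarrow> 'e::banach \<Rightarrow> 'e" +
  fixes fA fB :: "'g \<Rightarrow> 'e"
  assumes fA1: "fA \<one>\<^bsub>G\<^esub> = 0" and fB1: "fB \<one>\<^bsub>G\<^esub> = 0"
    and altA: "\<forall>a\<in>A. fA a + act a (fA (inv\<^bsub>G\<^esub> a)) = 0"
    and altB: "\<forall>b\<in>B. fB b + act b (fB (inv\<^bsub>G\<^esub> b)) = 0"
begin

definition fAB where "fAB x = (if x \<in> A then fA x else fB x)"

fun S where
  "S pre [] = 0"
| "S pre (x#xs) = act pre (fAB x) + S (pre \<otimes> x) xs"

abbreviation F where "F \<equiv> split_map G A B act fA fB"

lemma S_pre: "pre \<in> carrier G \<Longrightarrow> set xs \<subseteq> carrier G \<Longrightarrow> S pre xs = act pre (S \<one> xs)"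
proof (induction xs arbitrary: pre)
  case Nil then show ?case by (simp add: act_zero)
next
  case (Cons x xs)
  have xc: "x \<in> carrier G" and xsc: "set xs \<subseteq> carrier G" using Cons.prems by auto
  have px: "pre \<otimes> x \<in> carrier G" using Cons.prems xc by simp
  have e1: "S (pre \<otimes> x) xs = act (pre \<otimes> x) (S \<one> xs)" using Cons.IH[OF px xsc] .
  have e2: "S x xs = act x (S \<one> xs)" using Cons.IH[OF xc xsc] .
  have "S pre (x#xs) = act pre (fAB x) + act pre (act x (S \<one> xs))"
    using e1 Cons.prems xc by (simp add: act_mult)
  also have "\<dots> = act pre (S \<one> (x#xs))"
    using e2 Cons.prems xc by (simp add: act_add act_one)
  finally show ?case .
qed

lemma S_Cons1: "x \<in> carrier G \<Longrightarrow> set xs \<subseteq> carrier G \<Longrightarrow> S \<one> (x#xs) = fAB x + act x (S \<one> xs)"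
  using S_pre[of x xs] by (simp add: act_one)

lemma S_append: "set xs \<subseteq> carrier G \<Longrightarrow> set ys \<subseteq> carrier G \<Longrightarrow>
    S \<one> (xs@ys) = S \<one> xs + act (prod xs) (S \<one> ys)"
proof (induction xs)
  case Nil then show ?case by (simp add: act_one)
next
  case (Cons x xs)
  then have "S \<one> ((x#xs)@ys) = fAB x + act x (S \<one> xs + act (prod xs) (S \<one> ys))"
    using S_Cons1[of x "xs@ys"] by simp
  also have "\<dots> = S \<one> (x#xs) + act (prod (x#xs)) (S \<one> ys)"
    using Cons S_Cons1[of x xs] by (simp add: act_add act_mult prod_car)
  finally show ?case .
qed

lemma split_tpA: "red xs \<Longrightarrow> (xs = [] \<or> hd xs \<in> A) \<Longrightarrow> pre \<in> carrier G \<Longrightarrow>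
   split_aux G act fA fB pre (tpA xs) = S pre xs"
proof (induction xs arbitrary: pre rule: tpA.induct)
  case 1 then show ?case by simp
next
  case (2 a)
  have "a \<in> carrier G" using 2 L_car by simp
  then show ?case using fB1 2 by (simp add: act_zero fAB_def)
next
  case (3 a b xs)
  have aL: "a \<in> L" and bL: "b \<in> L" and ab: "\<not> samef a b" and rxs: "red xs"
    and hb: "xs = [] \<or> \<not> samef b (hd xs)" using "3.prems"(1) by (auto simp: red_Cons)
  have aA: "a \<in> A" using "3.prems"(2) by simp
  have bnA: "b \<notin> A" using ab aA aL bL by (simp add: samef_iff)
  have hxs: "xs = [] \<or> hd xs \<in> A"
  proof (cases xs)
    case (Cons c xs')
    then have "c \<in> L" using rxs by (simp add: red_Cons)
    then show ?thesis using hb Cons bL bnA by (simp add: samef_iff)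
  qed simp
  have ac: "a \<in> carrier G" and bc: "b \<in> carrier G" using aL bL L_car by auto
  have pc: "pre \<otimes> a \<otimes> b \<in> carrier G" using "3.prems"(3) ac bc by simp
  have "split_aux G act fA fB pre (tpA (a#b#xs)) =
      act pre (fA a) + act (pre \<otimes> a) (fB b) + S (pre \<otimes> a \<otimes> b) xs"
    using "3.IH"[OF rxs hxs pc] by simp
  also have "\<dots> = S pre (a#b#xs)" using aA bnA by (simp add: fAB_def add.assoc)
  finally show ?case .
qed

lemma F_red: "red xs \<Longrightarrow> F (prod xs) = S \<one> xs"
proof (cases "xs = []")
  case True then show ?thesis by (simp add: split_map_def)
next
  assume r: "red xs" and ne: "xs \<noteq> []"
  have pc: "prod xs \<in> carrier G" using r red_car prod_car by blast
  have "(THE ps. is_normal_form G A B ps (prod xs)) = tp xs"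
    using uniq tp_nf[OF r ne] prod_ne_one[OF r ne] pc by (metis the1_equality)
  then have "F (prod xs) = split_aux G act fA fB \<one> (tp xs)"
    using prod_ne_one[OF r ne] by (simp add: split_map_def)
  also have "\<dots> = S \<one> xs"
  proof -
    obtain x xs' where xs: "xs = x#xs'" using ne by (cases xs) auto
    show ?thesis
    proof (cases "x \<in> A")
      case True then show ?thesis using split_tpA[OF r] xs by (simp add: tp_def)
    next
      case False
      have xB: "x \<in> B - {\<one>}" using r xs False by (auto simp: red_Cons L_def)
      have rxs': "red xs'" using r xs by (simp add: red_Cons)
      have hxs: "xs' = [] \<or> hd xs' \<in> A"
        using r xs xB by (cases xs') (auto simp: red_Cons L_def samef_def)
      show ?thesis using split_tpA[OF rxs' hxs, of x] xs False xB fA1 B_car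
        by (simp add: tp_def act_one act_zero fAB_def)
    qed
  qed
  finally show ?thesis .
qed

lemma F_one[simp]: "F \<one> = 0" by (simp add: split_map_def)

lemma F_letter: "x \<in> L \<Longrightarrow> F x = fAB x"
  using F_red[of "[x]"] L_car by (simp add: act_one)

lemma F_A: "a \<in> A \<Longrightarrow> F a = fA a"
  using F_letter[of a] fA1 by (cases "a = \<one>") (auto simp: L_def fAB_def)

lemma F_B: "b \<in> B \<Longrightarrow> F b = fB b"
  using F_letter[of b] fB1 AB_int by (cases "b = \<one>") (auto simp: L_def fAB_def)

lemma F_app: "red (xs@ys) \<Longrightarrow> F (prod (xs@ys)) = F (prod xs) + act (prod xs) (F (prod ys))"
proof -
  assume r: "red (xs@ys)"
  then have rx: "red xs" and ry: "red ys" by (simp_all add: red_append)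
  show ?thesis using F_red[OF r] F_red[OF rx] F_red[OF ry] S_append[OF red_car[OF rx] red_car[OF ry]] by simp
qed


lemma prod_single: "x \<in> carrier G \<Longrightarrow> prod [x] = x" by simp

lemma F_Cons: "red (x#hs) \<Longrightarrow> F (x \<otimes> prod hs) = fAB x + act x (F (prod hs))"
proof -
  assume r: "red (x#hs)"
  have xL: "x \<in> L" using r by (simp add: red_Cons)
  then have xc: "x \<in> carrier G" using L_car by auto
  have "F (prod ([x]@hs)) = F (prod [x]) + act (prod [x]) (F (prod hs))" by (rule F_app) (use r in simp)
  then show ?thesis using xc F_letter[OF xL] by (simp del: prod_Cons add: prod_append) (simp add: prod_def)
qed

lemma F_snoc: "red (gs@[x]) \<Longrightarrow> F (prod gs \<otimes> x) = F (prod gs) + act (prod gs) (fAB x)"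
proof -
  assume r: "red (gs@[x])"
  have xL: "x \<in> L" using r by (simp add: red_append)
  then have xc: "x \<in> carrier G" using L_car by auto
  have "set gs \<subseteq> carrier G" using r red_append red_car by blast
  then show ?thesis using F_app[OF r] xc F_letter[OF xL] prod_append[of gs "[x]"] by simp
qed

lemma last_L: "red gs \<Longrightarrow> gs \<noteq> [] \<Longrightarrow> last gs \<in> L"
  unfolding red_def by auto
lemma hd_L: "red gs \<Longrightarrow> gs \<noteq> [] \<Longrightarrow> hd gs \<in> L"
  unfolding red_def by auto

lemma core:
  assumes bA: "\<forall>s\<in>A. \<forall>t\<in>A. norm (fA (s \<otimes> t) - fA s - act s (fA t)) \<le> M"
    and bB: "\<forall>s\<in>B. \<forall>t\<in>B. norm (fB (s \<otimes> t) - fB s - act s (fB t)) \<le> M"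
  shows "red hs \<Longrightarrow> g \<in> carrier G \<Longrightarrow> norm (F (g \<otimes> prod hs) - F g - act g (F (prod hs))) \<le> M"
proof (induction hs arbitrary: g)
  case Nil
  have "0 \<le> M" using bA one_A by (meson norm_ge_zero order_trans)
  then show ?case using Nil by (simp add: act_zero)
next
  case (Cons x hs)
  have xL: "x \<in> L" and rhs: "red hs" and hh: "hs = [] \<or> \<not> samef x (hd hs)"
    using Cons.prems by (auto simp: red_Cons)
  have xc: "x \<in> carrier G" using xL L_car by auto
  define h' where "h' = prod hs"
  have h'c: "h' \<in> carrier G" using rhs red_car prod_car h'_def by blast
  have gc: "g \<in> carrier G" using Cons.prems by simp
  have Fxh: "F (x \<otimes> h') = fAB x + act x (F h')" using F_Cons Cons.prems h'_def by simp
  define D1 where "D1 = F ((g \<otimes> x) \<otimes> h') - F (g \<otimes> x) - act (g \<otimes> x) (F h')"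
  define D2 where "D2 = F (g \<otimes> x) - F g - act g (fAB x)"
  have dec: "F (g \<otimes> prod (x#hs)) - F g - act g (F (prod (x#hs))) = D1 + D2"
    using xc h'c gc Fxh unfolding D1_def D2_def by (simp add: h'_def m_assoc act_add act_mult)
  have IH: "g \<otimes> x \<in> carrier G \<Longrightarrow> norm D1 \<le> M"
    using Cons.IH[OF rhs, folded h'_def, of "g \<otimes> x"] unfolding D1_def .
  have gxc: "g \<otimes> x \<in> carrier G" using gc xc by simp
  obtain gs where gs: "red gs" "prod gs = g" using red_word gc by blast
  show ?case
  proof (cases gs rule: rev_exhaust)
    case Nil
    then have g1: "g = \<one>" using gs by simp
    have "0 \<le> M" using bA one_A by (meson norm_ge_zero order_trans)
    moreover have "x \<otimes> prod hs \<in> carrier G" using xc h'c h'_def by simp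
    ultimately show ?thesis using g1 by (simp add: act_one)
  next
    case (snoc gs' y)
    have yL: "y \<in> L" and rgs': "red gs'" and hg: "gs' = [] \<or> \<not> samef (last gs') y"
      using gs snoc by (auto simp: red_append)
    have yc: "y \<in> carrier G" using yL L_car by auto
    define g0 where "g0 = prod gs'"
    have g0c: "g0 \<in> carrier G" using rgs' red_car prod_car g0_def by blast
    have gg: "g = g0 \<otimes> y" using gs snoc prod_append[of gs' "[y]"] red_car[OF rgs'] yc g0_def by simp
    show ?thesis
    proof (cases "samef y x")
      case False
      have rgx: "red (gs@[x])"
        unfolding red_append using gs(1) xL False snoc by simp
      have "F (g \<otimes> x) = F g + act g (fAB x)" using F_snoc[OF rgx] gs(2) by simp
      then have "D2 = 0" unfolding D2_def by simp
      then show ?thesis unfolding dec using IH[OF gxc] by simp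
    next
      case True
      have xy: "x \<in> A \<longleftrightarrow> y \<in> A" using True xL yL samef_iff by blast
      define z where "z = y \<otimes> x"
      have zX: "(z \<in> A \<and> x \<in> A \<and> y \<in> A) \<or> (z \<in> B \<and> x \<in> B \<and> y \<in> B \<and> x \<notin> A \<and> y \<notin> A)"
      proof (cases "y \<in> A")
        case True then show ?thesis using xy A_mult z_def by simp
      next
        case False then show ?thesis using xy B_mult z_def L_AB xL yL by simp
      qed
      have gx: "g \<otimes> x = g0 \<otimes> z" using gg g0c yc xc by (simp add: z_def m_assoc)
      have Fg: "F g = F g0 + act g0 (fAB y)"
        using F_snoc[of gs' y] gs snoc gg g0_def by simp
      have ag: "act g (fAB x) = act g0 (act y (fAB x))" using gg g0c yc act_mult by simp
      show ?thesis
      proof (cases "z = \<one>")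
        case True
        then have "x = inv y" using z_def xc yc by (metis inv_equality inv_comm)
        then have "fAB y + act y (fAB x) = 0"
        proof (cases "y \<in> A")
          case True then show ?thesis using \<open>x = inv y\<close> altA xy unfolding fAB_def by simp
        next
          case False
          then have "y \<in> B" using zX by blast
          then show ?thesis using \<open>x = inv y\<close> altB xy False unfolding fAB_def by simp
        qed
        then have "act g0 (fAB y) + act g0 (act y (fAB x)) = 0"
          using g0c by (simp add: act_add[symmetric] act_zero)
        moreover have "D2 = F g0 - (F g0 + act g0 (fAB y)) - act g0 (act y (fAB x))"
          unfolding D2_def using gx True g0c Fg ag by simp
        ultimately have "D2 = 0" by (rule grp_aux[rotated])
        then show ?thesis unfolding dec using IH[OF gxc] by simp
      next
        case False
        have zL: "z \<in> L" using zX False L_def by auto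
        have zy: "z \<in> A \<longleftrightarrow> y \<in> A" using zX zL L_AB by blast
        have zx: "z \<in> A \<longleftrightarrow> x \<in> A" using zX zL L_AB by blast
        have r1: "red (gs'@[z])"
        proof -
          have "gs' = [] \<or> \<not> samef (last gs') z"
          proof (cases "gs' = []")
            case False
            then have "last gs' \<in> L" using last_L rgs' by blast
            then show ?thesis using hg zL yL zy False by (simp add: samef_iff)
          qed simp
          then show ?thesis unfolding red_append using rgs' zL by simp
        qed
        have r2: "red ((gs'@[z])@hs)"
        proof -
          have "hs = [] \<or> \<not> samef z (hd hs)"
          proof (cases "hs = []")
            case False
            then have "hd hs \<in> L" using hd_L rhs by blast
            then show ?thesis using hh zL xL zx False by (simp add: samef_iff)
          qed simp
          then show ?thesis unfolding red_append[of "gs'@[z]"] using r1 rhs by simp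
        qed
        have pz: "prod (gs'@[z]) = g \<otimes> x"
          using gx g0_def prod_append[of gs' "[z]"] red_car[OF rgs'] zL L_car by simp
        have pa: "prod ((gs'@[z])@hs) = (g \<otimes> x) \<otimes> h'"
          using prod_append[OF red_car[OF r1] red_car[OF rhs]] pz h'_def by simp
        have "F (prod ((gs'@[z])@hs)) = F (prod (gs'@[z])) + act (prod (gs'@[z])) (F (prod hs))"
          by (rule F_app[OF r2])
        then have e1: "D1 = 0"
          unfolding pa pz D1_def h'_def[symmetric] by simp
        have Fgx: "F (g \<otimes> x) = F g0 + act g0 (fAB z)" using F_snoc[OF r1] gx g0_def by simp
        have "D2 = act g0 (fAB z - fAB y - act y (fAB x))"
          unfolding D2_def using Fgx Fg ag g0c by (simp add: act_diff)
        moreover have "norm (fAB z - fAB y - act y (fAB x)) \<le> M"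
        proof (cases "y \<in> A")
          case True
          then show ?thesis using zX bA unfolding fAB_def z_def by auto
        next
          case False
          then have "z \<notin> A" using zy by simp
          then show ?thesis using zX bB False unfolding fAB_def z_def by auto
        qed
        ultimately show ?thesis unfolding dec using e1 act_norm g0c by simp
      qed
    qed
  qed
qed

lemma red_inv: "red xs \<Longrightarrow> red (rev (map (m_inv G) xs)) \<and> prod (rev (map (m_inv G) xs)) = inv (prod xs)"
proof (induction xs)
  case Nil then show ?case by simp
next
  case (Cons x xs)
  have xL: "x \<in> L" and rxs: "red xs" and hx: "xs = [] \<or> \<not> samef x (hd xs)"
    using Cons.prems by (auto simp: red_Cons)
  have xc: "x \<in> carrier G" using xL L_car by auto
  have ix1: "inv x \<noteq> \<one>" using xL L_def xc by (metis inv_inv inv_one DiffD2 singletonI)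
  have ixL: "inv x \<in> L" using xL xc ix1 A_inv B_inv L_def inv_closed by auto
  note IH = Cons.IH[OF rxs]
  have "rev (map (m_inv G) xs) = [] \<or> \<not> samef (last (rev (map (m_inv G) xs))) (inv x)"
  proof (cases xs)
    case (Cons c cs)
    then have "c \<in> carrier G" using red_car[OF rxs] by auto
    then show ?thesis using Cons hx xc A_inv B_inv by (auto simp: samef_def last_rev)
  qed simp
  then have r: "red (rev (map (m_inv G) (x#xs)))" using IH ixL by (simp add: red_append)
  have "prod (rev (map (m_inv G) (x#xs))) = inv (prod xs) \<otimes> inv x"
    using IH prod_append[of "rev (map (m_inv G) xs)" "[inv x]"] red_car[OF conjunct1[OF IH]] ixL L_car by simp
  also have "\<dots> = inv (prod (x#xs))" using xc prod_car[OF red_car[OF rxs]] by (simp add: inv_mult_group)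
  finally show ?case using r by simp
qed

lemma F_alt: "g \<in> carrier G \<Longrightarrow> F g + act g (F (inv g)) = 0"
proof -
  assume "g \<in> carrier G"
  then obtain gs where gs: "red gs" "prod gs = g" using red_word by blast
  have "F (prod gs) + act (prod gs) (F (inv (prod gs))) = 0" using gs(1)
  proof (induction gs)
    case Nil then show ?case by (simp add: act_zero)
  next
    case (Cons x xs)
    have xL: "x \<in> L" and rxs: "red xs" using Cons.prems by (auto simp: red_Cons)
    have xc: "x \<in> carrier G" using xL L_car by auto
    define g' where "g' = prod xs"
    have g'c: "g' \<in> carrier G" using rxs red_car prod_car g'_def by blast
    have ixc: "inv x \<in> carrier G" using xc by simp
    have alt: "fAB x + act x (fAB (inv x)) = 0"
      using altA altB xL AB_int xc A_inv B_inv unfolding fAB_def L_def by auto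
    have R: "red (rev (map (m_inv G) (x#xs)))" and P: "prod (rev (map (m_inv G) (x#xs))) = inv (prod (x#xs))"
      using red_inv[OF Cons.prems] by auto
    have Rx: "red (rev (map (m_inv G) xs) @ [inv x])" using R by simp
    have iv: "inv (prod (x#xs)) = inv g' \<otimes> inv x" using xc g'c g'_def by (simp add: inv_mult_group)
    have "F (prod (rev (map (m_inv G) xs)) \<otimes> inv x) = F (prod (rev (map (m_inv G) xs)))
         + act (prod (rev (map (m_inv G) xs))) (fAB (inv x))"
      by (rule F_snoc[OF Rx])
    then have Fi: "F (inv (prod (x#xs))) = F (inv g') + act (inv g') (fAB (inv x))"
      unfolding conjunct2[OF red_inv[OF rxs]] iv g'_def .
    have Fg: "F (prod (x#xs)) = fAB x + act x (F g')" using F_Cons[OF Cons.prems] g'_def by simp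
    have "F (prod (x#xs)) + act (prod (x#xs)) (F (inv (prod (x#xs))))
       = fAB x + act x (F g') + act x (act g' (F (inv g'))) + act x (fAB (inv x))"
      using Fg Fi xc g'c g'_def by (simp add: act_add act_mult act_inv_cancel)
    also have "\<dots> = fAB x + act x (fAB (inv x)) + act x (F g' + act g' (F (inv g')))"
      using g'c xc by (simp add: act_add algebra_simps)
    also have "\<dots> = 0" using alt Cons.IH[OF rxs] xc g'_def by (simp add: act_zero)
    finally show ?case .
  qed
  then show ?thesis using gs by simp
qed


lemma core_all:
  assumes bA: "\<forall>s\<in>A. \<forall>t\<in>A. norm (fA (s \<otimes> t) - fA s - act s (fA t)) \<le> M"
    and bB: "\<forall>s\<in>B. \<forall>t\<in>B. norm (fB (s \<otimes> t) - fB s - act s (fB t)) \<le> M"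
    and g: "g \<in> carrier G" and h: "h \<in> carrier G"
  shows "norm (F (g \<otimes> h) - F g - act g (F h)) \<le> M"
proof -
  obtain hs where "red hs" "prod hs = h" using red_word h by blast
  then show ?thesis using core[OF bA bB] g by blast
qed

lemma cocycle_unique:
  assumes f: "\<forall>g\<in>carrier G. \<forall>h\<in>carrier G. f (g \<otimes> h) = f g + act g (f h)"
    and fa: "\<forall>a\<in>A. f a = fA a" and fb: "\<forall>b\<in>B. f b = fB b"
    and g: "g \<in> carrier G"
  shows "f g = F g"
proof -
  have "f \<one> = 0" using f[rule_format, of \<one> \<one>] by (simp add: act_one)
  have *: "set xs \<subseteq> L \<Longrightarrow> f (prod xs) = S \<one> xs" for xs
  proof (induction xs)
    case Nil then show ?case using \<open>f \<one> = 0\<close> by simp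
  next
    case (Cons x xs)
    have xc: "x \<in> carrier G" using Cons.prems L_car by auto
    have xsc: "set xs \<subseteq> carrier G" using Cons.prems L_car by auto
    have "f x = fAB x" using fa fb Cons.prems L_def unfolding fAB_def by auto
    then show ?case using f xc prod_car[OF xsc] Cons S_Cons1[OF xc xsc] by simp
  qed
  obtain gs where "red gs" "prod gs = g" using red_word g by blast
  then show ?thesis using * F_red red_def by metis
qed

end

lemma (in fp0) split_aux_lin:
  "pre \<in> carrier G \<Longrightarrow> (\<forall>p\<in>set ps. fst p \<in> A \<and> snd p \<in> B) \<Longrightarrow>
   split_aux G act (\<lambda>x. c *\<^sub>R fA x + fA' x) (\<lambda>x. c *\<^sub>R fB x + fB' x) pre ps
     = c *\<^sub>R split_aux G act fA fB pre ps + split_aux G act fA' fB' pre ps"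
proof (induction ps arbitrary: pre)
  case Nil then show ?case by simp
next
  case (Cons p ps)
  obtain a b where p: "p = (a,b)" by force
  have ac: "a \<in> carrier G" and bc: "b \<in> carrier G" using Cons.prems p A_car B_car by auto
  have "pre \<otimes> a \<otimes> b \<in> carrier G" using Cons.prems ac bc by simp
  then show ?case using Cons p ac bc by (simp add: act_add act_scale algebra_simps)
qed

lemma (in fp0) split_map_lin:
  assumes "g \<in> carrier G"
  shows "split_map G A B act (\<lambda>x. c *\<^sub>R fA x + fA' x) (\<lambda>x. c *\<^sub>R fB x + fB' x) g
            = c *\<^sub>R split_map G A B act fA fB g + split_map G A B act fA' fB' g"
proof (cases "g = \<one>")
  case True then show ?thesis by (simp add: split_map_def)
next
  case False
  then have "is_normal_form G A B (THE ps. is_normal_form G A B ps g) g"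
    using uniq assms by (metis theI')
  then show ?thesis using False split_aux_lin nf_sets by (simp add: split_map_def)
qed

theorem proposition2p1:
  fixes G :: "('g,'m) monoid_scheme" and A B :: "'g set"
    and act :: "'g \<Rightarrow> 'e::banach \<Rightarrow> 'e"
  assumes free: "is_free_product G A B"
    and A_nontriv: "A \<noteq> {\<one>\<^bsub>G\<^esub>}" and B_nontriv: "B \<noteq> {\<one>\<^bsub>G\<^esub>}"
    and module: "banach_module G act"
  shows
    "(\<forall>fA fB. alt_quasicocycle G A act fA \<and> alt_quasicocycle G B act fB \<longrightarrow>
        alt_quasicocycle G (carrier G) act (split_map G A B act fA fB) \<and>
        defect G (carrier G) act (split_map G A B act fA fB)
          = max (defect G A act fA) (defect G B act fB))
   \<and> (\<forall>fA fB fA' fB' (c::real).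
        alt_quasicocycle G A act fA \<and> alt_quasicocycle G B act fB \<and>
        alt_quasicocycle G A act fA' \<and> alt_quasicocycle G B act fB' \<longrightarrow>
        (\<forall>g\<in>carrier G. split_map G A B act (\<lambda>x. c *\<^sub>R fA x + fA' x) (\<lambda>x. c *\<^sub>R fB x + fB' x) g
            = c *\<^sub>R split_map G A B act fA fB g + split_map G A B act fA' fB' g))
   \<and> (\<forall>fA fB. cocycle G A act fA \<and> cocycle G B act fB \<longrightarrow>
        cocycle G (carrier G) act (split_map G A B act fA fB) \<and>
        (\<forall>a\<in>A. split_map G A B act fA fB a = fA a) \<and>
        (\<forall>b\<in>B. split_map G A B act fA fB b = fB b) \<and>
        (\<forall>f. cocycle G (carrier G) act f \<and> (\<forall>a\<in>A. f a = fA a) \<and> (\<forall>b\<in>B. f b = fB b) \<longrightarrow>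
             (\<forall>g\<in>carrier G. f g = split_map G A B act fA fB g)))"
proof -
  have grp: "group G" and sA: "subgroup A G" and sB: "subgroup B G"
    and uq: "\<forall>g\<in>carrier G. g \<noteq> \<one>\<^bsub>G\<^esub> \<longrightarrow> (\<exists>!ps. is_normal_form G A B ps g)"
    using free unfolding is_free_product_def by auto
  interpret fp0 G A B act
    by (intro fp0.intro fp0_axioms.intro grp sA sB uq module)
  have P1: "alt_quasicocycle G (carrier G) act (split_map G A B act fA fB) \<and>
        defect G (carrier G) act (split_map G A B act fA fB)
          = max (defect G A act fA) (defect G B act fB)"
    if qA: "alt_quasicocycle G A act fA" and qB: "alt_quasicocycle G B act fB" for fA fB
  proof -
    have aA: "\<forall>a\<in>A. fA a + act a (fA (inv\<^bsub>G\<^esub> a)) = 0" and aB: "\<forall>b\<in>B. fB b + act b (fB (inv\<^bsub>G\<^esub> b)) = 0"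
      using qA qB unfolding alt_quasicocycle_def alternating_def by auto
    have "fA \<one>\<^bsub>G\<^esub> + act \<one>\<^bsub>G\<^esub> (fA (inv\<^bsub>G\<^esub> \<one>\<^bsub>G\<^esub>)) = 0" using aA one_A by blast
    then have "fA \<one>\<^bsub>G\<^esub> + fA \<one>\<^bsub>G\<^esub> = 0" by (simp add: act_one)
    then have fA1: "fA \<one>\<^bsub>G\<^esub> = 0" by (rule double_zero)
    have "fB \<one>\<^bsub>G\<^esub> + act \<one>\<^bsub>G\<^esub> (fB (inv\<^bsub>G\<^esub> \<one>\<^bsub>G\<^esub>)) = 0" using aB one_B by blast
    then have "fB \<one>\<^bsub>G\<^esub> + fB \<one>\<^bsub>G\<^esub> = 0" by (simp add: act_one)
    then have fB1: "fB \<one>\<^bsub>G\<^esub> = 0" by (rule double_zero)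
    interpret fp G A B act fA fB
      by (intro fp.intro fp_axioms.intro fp0_axioms fA1 fB1 aA aB)
    define SA where "SA = {norm (fA (g \<otimes>\<^bsub>G\<^esub> h) - fA g - act g (fA h)) | g h. g \<in> A \<and> h \<in> A}"
    define SB where "SB = {norm (fB (g \<otimes>\<^bsub>G\<^esub> h) - fB g - act g (fB h)) | g h. g \<in> B \<and> h \<in> B}"
    define SG where "SG = {norm (F (g \<otimes>\<^bsub>G\<^esub> h) - F g - act g (F h)) | g h. g \<in> carrier G \<and> h \<in> carrier G}"
    have bA: "bdd_above SA" using qA unfolding alt_quasicocycle_def quasicocycle_def SA_def by (elim conjE) assumption
    have bB: "bdd_above SB" using qB unfolding alt_quasicocycle_def quasicocycle_def SB_def by (elim conjE) assumption
    have neA: "SA \<noteq> {}" using one_A unfolding SA_def by blast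
    have neB: "SB \<noteq> {}" using one_B unfolding SB_def by blast
    have neG: "SG \<noteq> {}" unfolding SG_def by blast
    define M where "M = max (Sup SA) (Sup SB)"
    have bdA: "\<forall>s\<in>A. \<forall>t\<in>A. norm (fA (s \<otimes>\<^bsub>G\<^esub> t) - fA s - act s (fA t)) \<le> M"
    proof (intro ballI)
      fix s t assume "s \<in> A" "t \<in> A"
      then have "norm (fA (s \<otimes>\<^bsub>G\<^esub> t) - fA s - act s (fA t)) \<in> SA" unfolding SA_def by blast
      then have "norm (fA (s \<otimes>\<^bsub>G\<^esub> t) - fA s - act s (fA t)) \<le> Sup SA" by (rule cSup_upper[OF _ bA])
      then show "norm (fA (s \<otimes>\<^bsub>G\<^esub> t) - fA s - act s (fA t)) \<le> M" unfolding M_def by linarith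
    qed
    have bdB: "\<forall>s\<in>B. \<forall>t\<in>B. norm (fB (s \<otimes>\<^bsub>G\<^esub> t) - fB s - act s (fB t)) \<le> M"
    proof (intro ballI)
      fix s t assume "s \<in> B" "t \<in> B"
      then have "norm (fB (s \<otimes>\<^bsub>G\<^esub> t) - fB s - act s (fB t)) \<in> SB" unfolding SB_def by blast
      then have "norm (fB (s \<otimes>\<^bsub>G\<^esub> t) - fB s - act s (fB t)) \<le> Sup SB" by (rule cSup_upper[OF _ bB])
      then show "norm (fB (s \<otimes>\<^bsub>G\<^esub> t) - fB s - act s (fB t)) \<le> M" unfolding M_def by linarith
    qed
    have leM: "\<forall>x\<in>SG. x \<le> M"
    proof
      fix x assume "x \<in> SG"
      then obtain g h where gh: "g \<in> carrier G" "h \<in> carrier G" "x = norm (F (g \<otimes>\<^bsub>G\<^esub> h) - F g - act g (F h))"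
        unfolding SG_def by blast
      then show "x \<le> M" using core_all[OF bdA bdB gh(1) gh(2)] by simp
    qed
    then have bG: "bdd_above SG" by (intro bdd_aboveI[of _ M]) simp
    have "SA \<subseteq> SG"
    proof
      fix x assume "x \<in> SA"
      then obtain s t where st: "s \<in> A" "t \<in> A" "x = norm (fA (s \<otimes>\<^bsub>G\<^esub> t) - fA s - act s (fA t))"
        unfolding SA_def by blast
      then have "x = norm (F (s \<otimes>\<^bsub>G\<^esub> t) - F s - act s (F t))" using F_A A_mult by simp
      moreover have "s \<in> carrier G" "t \<in> carrier G" using st A_car by auto
      ultimately show "x \<in> SG" unfolding SG_def by blast
    qed
    moreover have "SB \<subseteq> SG"
    proof
      fix x assume "x \<in> SB"
      then obtain s t where st: "s \<in> B" "t \<in> B" "x = norm (fB (s \<otimes>\<^bsub>G\<^esub> t) - fB s - act s (fB t))"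
        unfolding SB_def by blast
      then have "x = norm (F (s \<otimes>\<^bsub>G\<^esub> t) - F s - act s (F t))" using F_B B_mult by simp
      moreover have "s \<in> carrier G" "t \<in> carrier G" using st B_car by auto
      ultimately show "x \<in> SG" unfolding SG_def by blast
    qed
    ultimately have "Sup SA \<le> Sup SG" "Sup SB \<le> Sup SG"
      using cSup_subset_mono[OF neA bG] cSup_subset_mono[OF neB bG] by blast+
    moreover have "Sup SG \<le> M" using cSup_least[OF neG] leM by blast
    ultimately have SGM: "Sup SG = M" unfolding M_def by linarith
    have "defect G (carrier G) act F = Sup SG" unfolding defect_def SG_def by simp
    moreover have "defect G A act fA = Sup SA" unfolding defect_def SA_def by simp
    moreover have "defect G B act fB = Sup SB" unfolding defect_def SB_def by simp
    ultimately have "defect G (carrier G) act F = max (defect G A act fA) (defect G B act fB)"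
      using SGM M_def by simp
    moreover have "quasicocycle G (carrier G) act F" using bG unfolding quasicocycle_def SG_def .
    moreover have "alternating G (carrier G) act F" using F_alt unfolding alternating_def by blast
    ultimately show ?thesis unfolding alt_quasicocycle_def by blast
  qed
  have P3: "cocycle G (carrier G) act (split_map G A B act fA fB) \<and>
        (\<forall>a\<in>A. split_map G A B act fA fB a = fA a) \<and>
        (\<forall>b\<in>B. split_map G A B act fA fB b = fB b) \<and>
        (\<forall>f. cocycle G (carrier G) act f \<and> (\<forall>a\<in>A. f a = fA a) \<and> (\<forall>b\<in>B. f b = fB b) \<longrightarrow>
             (\<forall>g\<in>carrier G. f g = split_map G A B act fA fB g))"
    if cA: "cocycle G A act fA" and cB: "cocycle G B act fB" for fA fB
  proof -
    have cA': "\<forall>s\<in>A. \<forall>t\<in>A. fA (s \<otimes>\<^bsub>G\<^esub> t) = fA s + act s (fA t)"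
      using cA unfolding cocycle_def by blast
    have cB': "\<forall>s\<in>B. \<forall>t\<in>B. fB (s \<otimes>\<^bsub>G\<^esub> t) = fB s + act s (fB t)"
      using cB unfolding cocycle_def by blast
    have "fA (\<one>\<^bsub>G\<^esub> \<otimes>\<^bsub>G\<^esub> \<one>\<^bsub>G\<^esub>) = fA \<one>\<^bsub>G\<^esub> + act \<one>\<^bsub>G\<^esub> (fA \<one>\<^bsub>G\<^esub>)"
      using cA' one_A by blast
    then have fA1: "fA \<one>\<^bsub>G\<^esub> = 0" by (simp add: act_one)
    have "fB (\<one>\<^bsub>G\<^esub> \<otimes>\<^bsub>G\<^esub> \<one>\<^bsub>G\<^esub>) = fB \<one>\<^bsub>G\<^esub> + act \<one>\<^bsub>G\<^esub> (fB \<one>\<^bsub>G\<^esub>)"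
      using cB' one_B by blast
    then have fB1: "fB \<one>\<^bsub>G\<^esub> = 0" by (simp add: act_one)
    have aA: "\<forall>a\<in>A. fA a + act a (fA (inv\<^bsub>G\<^esub> a)) = 0"
    proof
      fix a assume a: "a \<in> A"
      then have ia: "inv\<^bsub>G\<^esub> a \<in> A" using A_inv A_car by auto
      have "fA (a \<otimes>\<^bsub>G\<^esub> inv\<^bsub>G\<^esub> a) = fA a + act a (fA (inv\<^bsub>G\<^esub> a))" using cA' a ia by blast
      then show "fA a + act a (fA (inv\<^bsub>G\<^esub> a)) = 0" using a A_car fA1 by simp
    qed
    have aB: "\<forall>b\<in>B. fB b + act b (fB (inv\<^bsub>G\<^esub> b)) = 0"
    proof
      fix b assume b: "b \<in> B"
      then have ib: "inv\<^bsub>G\<^esub> b \<in> B" using B_inv B_car by auto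
      have "fB (b \<otimes>\<^bsub>G\<^esub> inv\<^bsub>G\<^esub> b) = fB b + act b (fB (inv\<^bsub>G\<^esub> b))" using cB' b ib by blast
      then show "fB b + act b (fB (inv\<^bsub>G\<^esub> b)) = 0" using b B_car fB1 by simp
    qed
    interpret fp G A B act fA fB
      by (intro fp.intro fp_axioms.intro fp0_axioms fA1 fB1 aA aB)
    have bdA: "\<forall>s\<in>A. \<forall>t\<in>A. norm (fA (s \<otimes>\<^bsub>G\<^esub> t) - fA s - act s (fA t)) \<le> 0" using cA' by simp
    have bdB: "\<forall>s\<in>B. \<forall>t\<in>B. norm (fB (s \<otimes>\<^bsub>G\<^esub> t) - fB s - act s (fB t)) \<le> 0" using cB' by simp
    have "cocycle G (carrier G) act F"
      unfolding cocycle_def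
    proof (intro ballI)
      fix g h assume "g \<in> carrier G" "h \<in> carrier G"
      then have "norm (F (g \<otimes>\<^bsub>G\<^esub> h) - F g - act g (F h)) \<le> 0" by (rule core_all[OF bdA bdB])
      then have "F (g \<otimes>\<^bsub>G\<^esub> h) - F g - act g (F h) = 0" by simp
      then show "F (g \<otimes>\<^bsub>G\<^esub> h) = F g + act g (F h)" by (simp add: algebra_simps)
    qed
    moreover have "\<forall>f. cocycle G (carrier G) act f \<and> (\<forall>a\<in>A. f a = fA a) \<and> (\<forall>b\<in>B. f b = fB b) \<longrightarrow>
             (\<forall>g\<in>carrier G. f g = F g)"
    proof (intro allI impI ballI)
      fix f g assume H: "cocycle G (carrier G) act f \<and> (\<forall>a\<in>A. f a = fA a) \<and> (\<forall>b\<in>B. f b = fB b)"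
        and g: "g \<in> carrier G"
      have "\<forall>g\<in>carrier G. \<forall>h\<in>carrier G. f (g \<otimes>\<^bsub>G\<^esub> h) = f g + act g (f h)"
        using H unfolding cocycle_def by blast
      then show "f g = F g" using cocycle_unique H g by blast
    qed
    ultimately show ?thesis using F_A F_B by blast
  qed
  show ?thesis
  proof (intro conjI)
    show "\<forall>fA fB. alt_quasicocycle G A act fA \<and> alt_quasicocycle G B act fB \<longrightarrow>
        alt_quasicocycle G (carrier G) act (split_map G A B act fA fB) \<and>
        defect G (carrier G) act (split_map G A B act fA fB)
          = max (defect G A act fA) (defect G B act fB)" using P1 by blast
    show "\<forall>fA fB fA' fB' (c::real).
        alt_quasicocycle G A act fA \<and> alt_quasicocycle G B act fB \<and>
        alt_quasicocycle G A act fA' \<and> alt_quasicocycle G B act fB' \<longrightarrow>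
        (\<forall>g\<in>carrier G. split_map G A B act (\<lambda>x. c *\<^sub>R fA x + fA' x) (\<lambda>x. c *\<^sub>R fB x + fB' x) g
            = c *\<^sub>R split_map G A B act fA fB g + split_map G A B act fA' fB' g)"
      using split_map_lin by blast
    show "\<forall>fA fB. cocycle G A act fA \<and> cocycle G B act fB \<longrightarrow>
        cocycle G (carrier G) act (split_map G A B act fA fB) \<and>
        (\<forall>a\<in>A. split_map G A B act fA fB a = fA a) \<and>
        (\<forall>b\<in>B. split_map G A B act fA fB b = fB b) \<and>
        (\<forall>f. cocycle G (carrier G) act f \<and> (\<forall>a\<in>A. f a = fA a) \<and> (\<forall>b\<in>B. f b = fB b) \<longrightarrow>
             (\<forall>g\<in>carrier G. f g = split_map G A B act fA fB g))"
      using P3 by blast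
  qed
qed

end
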